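(* Let $a,b,c,d\ge1$ be integers and let $$M=\begin{bmatrix}a&-1&-1&-1\\-1&b&-1&-1\\-1&-1&c&-1\\-1&-1&-1&d\end{bmatrix}.$$ If $\det M=0$ and two of $a,b,c,d$ equal $7$, then the other two are $1$ and $3$ (in some order). *)

theory Defs
  imports "HOL-Analysis.Analysis"
begin

definition Mmat :: "int \<Rightarrow> int \<Rightarrow> int \<Rightarrow> int \<Rightarrow> real^4^4" where
  "Mmat a b c d = vector [
     vector [real_of_int a, -1, -1, -1],
     vector [-1, real_of_int b, -1, -1],
     vector [-1, -1, real_of_int c, -1],
     vector [-1, -1, -1, real_of_int d]]"

end

theory Submission
  imports Defs
begin

lemma vector_4 [simp]:
 "(vector [x,y,z,w] ::('a::zero)^4)$1 = x"
 "(vector [x,y,z,w] ::('a::zero)^4)$2 = y"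
 "(vector [x,y,z,w] ::('a::zero)^4)$3 = z"
 "(vector [x,y,z,w] ::('a::zero)^4)$4 = w"
  unfolding vector_def by simp_all

lemma detM: "det (Mmat a b c d) = real_of_int ((a+1)*(b+1)*(c+1)*(d+1) - (b+1)*(c+1)*(d+1) - (a+1)*(c+1)*(d+1) - (a+1)*(b+1)*(d+1) - (a+1)*(b+1)*(c+1))"
proof -
  have f1: "finite {2::4, 3, 4}" "1 \<notin> {2::4, 3, 4}" by auto
  have f2: "finite {3::4, 4}" "2 \<notin> {3::4, 4}" by auto
  have f3: "finite {4::4}" "3 \<notin> {4::4}" by auto
  show ?thesis
    unfolding det_def UNIV_4
    unfolding sum_over_permutations_insert[OF f1]
    unfolding sum_over_permutations_insert[OF f2]
    unfolding sum_over_permutations_insert[OF f3]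
    unfolding permutes_sing
    apply (simp add: sign_swap_id permutation_swap_id permutation_compose sign_compose swap_id_eq Mmat_def)
    apply (simp add: algebra_simps)
    done
qed

lemma key:
  fixes c d :: int
  assumes "c \<ge> 1" "d \<ge> 1"
    and "64*(c+1)*(d+1) - 2*8*(c+1)*(d+1) - 64*(d+1) - 64*(c+1) = 0"
  shows "{c, d} = {1, 3}"
proof -
  have e: "3*c*d - c - d - 5 = 0" using assms(3) by (simp add: algebra_simps)
  have "c \<le> 3"
  proof (rule ccontr)
    assume "\<not> c \<le> 3"
    then have "c*(3*d-1) \<ge> 4*(3*d-1)" using assms by (intro mult_right_mono) auto
    then show False using e assms by (simp add: algebra_simps)
  qed
  moreover have "d \<le> 3"
  proof (rule ccontr)
    assume "\<not> d \<le> 3"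
    then have "d*(3*c-1) \<ge> 4*(3*c-1)" using assms by (intro mult_right_mono) auto
    then show False using e assms by (simp add: algebra_simps)
  qed
  ultimately have "c \<in> {1,2,3}" "d \<in> {1,2,3}" using assms by auto
  then show ?thesis using e by auto
qed

theorem lemma3p8:
  fixes a b c d :: int
  assumes "a \<ge> 1" "b \<ge> 1" "c \<ge> 1" "d \<ge> 1"
    and "det (Mmat a b c d) = 0"
  shows "(a = 7 \<and> b = 7 \<longrightarrow> {c, d} = {1, 3}) \<and>
         (a = 7 \<and> c = 7 \<longrightarrow> {b, d} = {1, 3}) \<and>
         (a = 7 \<and> d = 7 \<longrightarrow> {b, c} = {1, 3}) \<and>
         (b = 7 \<and> c = 7 \<longrightarrow> {a, d} = {1, 3}) \<and>
         (b = 7 \<and> d = 7 \<longrightarrow> {a, c} = {1, 3}) \<and>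
         (c = 7 \<and> d = 7 \<longrightarrow> {a, b} = {1, 3})"
proof -
  have E: "(a+1)*(b+1)*(c+1)*(d+1) - (b+1)*(c+1)*(d+1) - (a+1)*(c+1)*(d+1) - (a+1)*(b+1)*(d+1) - (a+1)*(b+1)*(c+1) = 0"
    using assms(5) unfolding detM by linarith
  show ?thesis
    apply (intro conjI impI)
    subgoal using key[of c d] E assms by (simp add: algebra_simps)
    subgoal using key[of b d] E assms by (simp add: algebra_simps)
    subgoal using key[of b c] E assms by (simp add: algebra_simps)
    subgoal using key[of a d] E assms by (simp add: algebra_simps)
    subgoal using key[of a c] E assms by (simp add: algebra_simps)
    subgoal using key[of a b] E assms by (simp add: algebra_simps)
    done
qed

end
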